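(* Let $X$ be a continuum (a connected compact metric space). Then for every real $t \ge \operatorname{diam} X$ with $t>0$ and every positive integer $p$, $$d_{GH}(t\Delta_p, X) = d_{GH}\bigl(\mathcal{H}(t\Delta_p), \mathcal{H}(X)\bigr).$$
   Context: A simplex $t\Delta_p$ is the metric space with $p$ points, any two distinct ones at distance $t$. For a compact metric space $X$, $\mathcal{H}(X)$ is the set of all nonempty closed subsets of $X$ with the Hausdorff distance $|AB| = \max\{\sup_{a\in A}\inf_{b\in B}|ab|, \sup_{b\in B}\inf_{a\in A}|ab|\}$. $d_{GH}$ is the Gromov–Hausdorff distance (the infimum of $r$ such that there is a metric space $Z$ containing isometric copies $X',Y'$ of the two spaces with Hausdorff distance $|X'Y'|_Z\le r$). *)

theory Defs
  imports "HOL-Analysis.Analysis"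
begin

definition diam_of :: "'a set \<Rightarrow> ('a \<Rightarrow> 'a \<Rightarrow> real) \<Rightarrow> real" where
  "diam_of X d = Sup {d x y | x y. x \<in> X \<and> y \<in> X}"

definition continuum :: "'a set \<Rightarrow> ('a \<Rightarrow> 'a \<Rightarrow> real) \<Rightarrow> bool" where
  "continuum X d \<longleftrightarrow> Metric_space X d \<and> X \<noteq> {} \<and>
     compact_space (Metric_space.mtopology X d) \<and>
     connected_space (Metric_space.mtopology X d)"

definition hausd :: "('a \<Rightarrow> 'a \<Rightarrow> real) \<Rightarrow> 'a set \<Rightarrow> 'a set \<Rightarrow> real" where
  "hausd d A B = max (SUP a\<in>A. INF b\<in>B. d a b) (SUP b\<in>B. INF a\<in>A. d a b)"

definition simplex_carrier :: "nat \<Rightarrow> nat set" where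
  "simplex_carrier p = {0..<p}"

definition simplex_dist :: "real \<Rightarrow> nat \<Rightarrow> nat \<Rightarrow> real" where
  "simplex_dist t i j = (if i = j then 0 else t)"

definition hyp_carrier :: "'a set \<Rightarrow> ('a \<Rightarrow> 'a \<Rightarrow> real) \<Rightarrow> 'a set set" where
  "hyp_carrier X d = {A. A \<subseteq> X \<and> A \<noteq> {} \<and> closedin (Metric_space.mtopology X d) A}"

definition hyp_dist :: "('a \<Rightarrow> 'a \<Rightarrow> real) \<Rightarrow> 'a set \<Rightarrow> 'a set \<Rightarrow> real" where
  "hyp_dist d = hausd d"

definition isom_embed :: "'a set \<Rightarrow> ('a \<Rightarrow> 'a \<Rightarrow> real) \<Rightarrow> 'z set \<Rightarrow> ('z \<Rightarrow> 'z \<Rightarrow> real)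
    \<Rightarrow> ('a \<Rightarrow> 'z) \<Rightarrow> bool" where
  "isom_embed X dX Z dZ f \<longleftrightarrow> f ` X \<subseteq> Z \<and> (\<forall>x\<in>X. \<forall>y\<in>X. dZ (f x) (f y) = dX x y)"

text \<open>The
ambient space Z is taken with points in the type 'a + 'b, which is no loss of
generality (one may always restrict Z to the union of the two copies, which
injects into the disjoint union).\<close>
definition GH_dist :: "'a set \<Rightarrow> ('a \<Rightarrow> 'a \<Rightarrow> real) \<Rightarrow> 'b set \<Rightarrow> ('b \<Rightarrow> 'b \<Rightarrow> real) \<Rightarrow> real" where
  "GH_dist X dX Y dY = Inf {r. \<exists>(Z :: ('a + 'b) set) dZ f g.
      Metric_space Z dZ \<and> isom_embed X dX Z dZ f \<and> isom_embed Y dY Z dZ g \<and>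
      hausd dZ (f ` X) (g ` Y) \<le> r}"

end

theory Submission
  imports Defs
begin



lemma hausd_swap: "hausd d A B = hausd (\<lambda>x y. d y x) B A"
  by (simp add: hausd_def max.commute)

lemma inf_lt_ex: "B \<noteq> {} \<Longrightarrow> (INF b\<in>B. f b) < (r::real) \<Longrightarrow> \<exists>b\<in>B. f b < r"
  by (meson cINF_greatest not_le)

lemma inf_le_elem: "(\<And>b. b \<in> B \<Longrightarrow> 0 \<le> f b) \<Longrightarrow> b \<in> B \<Longrightarrow> (INF b\<in>B. f b) \<le> (f b::real)"
  by (rule cINF_lower) (auto intro: bdd_belowI2[where m=0])

lemma hausd_bdd1:
  assumes "B \<noteq> {}" "\<And>a b. a\<in>A \<Longrightarrow> b\<in>B \<Longrightarrow> 0 \<le> d a b \<and> d a b \<le> (K::real)"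
  shows "bdd_above ((\<lambda>a. INF b\<in>B. d a b) ` A)"
proof (rule bdd_aboveI2[where M=K])
  fix a assume a: "a \<in> A"
  obtain b0 where b0: "b0 \<in> B" using assms(1) by auto
  have "(INF b\<in>B. d a b) \<le> d a b0" using inf_le_elem[of B "d a" b0] assms(2) a b0 by auto
  also have "\<dots> \<le> K" using assms(2) a b0 by auto
  finally show "(INF b\<in>B. d a b) \<le> K" .
qed

lemma hausd_lt1:
  assumes "A \<noteq> {}" "B \<noteq> {}" "\<And>a b. a\<in>A \<Longrightarrow> b\<in>B \<Longrightarrow> 0 \<le> d a b \<and> d a b \<le> (K::real)"
    "hausd d A B < r" "a \<in> A"
  shows "\<exists>b\<in>B. d a b < r"
proof -
  have "(INF b\<in>B. d a b) \<le> (SUP a\<in>A. INF b\<in>B. d a b)"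
    by (rule cSUP_upper[OF assms(5) hausd_bdd1[OF assms(2,3)]])
  also have "\<dots> \<le> hausd d A B" unfolding hausd_def by simp
  finally have "(INF b\<in>B. d a b) < r" using assms(4) by simp
  then show ?thesis using inf_lt_ex[OF assms(2)] by blast
qed

lemma hausd_lt2:
  assumes "A \<noteq> {}" "B \<noteq> {}" "\<And>a b. a\<in>A \<Longrightarrow> b\<in>B \<Longrightarrow> 0 \<le> d a b \<and> d a b \<le> (K::real)"
    "hausd d A B < r" "b \<in> B"
  shows "\<exists>a\<in>A. d a b < r"
  using hausd_lt1[of B A "\<lambda>x y. d y x" K r b] assms hausd_swap[of d A B] by auto

lemma hausd_ge0:
  assumes "A \<noteq> {}" "B \<noteq> {}" "\<And>a b. a\<in>A \<Longrightarrow> b\<in>B \<Longrightarrow> 0 \<le> d a b \<and> d a b \<le> (K::real)"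
  shows "0 \<le> hausd d A B"
proof -
  obtain a where a: "a \<in> A" using assms(1) by auto
  have "0 \<le> (INF b\<in>B. d a b)" using assms a by (intro cINF_greatest) auto
  also have "\<dots> \<le> (SUP a\<in>A. INF b\<in>B. d a b)"
    by (rule cSUP_upper[OF a hausd_bdd1[OF assms(2,3)]])
  also have "\<dots> \<le> hausd d A B" unfolding hausd_def by simp
  finally show ?thesis .
qed

lemma inf_le_of_eps:
  assumes "B \<noteq> {}" "\<And>b. b \<in> B \<Longrightarrow> 0 \<le> f b" "\<forall>e>0. \<exists>b\<in>B. f b < r + e"
  shows "(INF b\<in>B. f b) \<le> (r::real)"
proof (rule ccontr)
  assume "\<not> ?thesis"
  then have "(INF b\<in>B. f b) - r > 0" by simp
  then obtain b where b: "b \<in> B" "f b < r + ((INF b\<in>B. f b) - r)" using assms(3) by blast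
  have "(INF b\<in>B. f b) \<le> f b" using inf_le_elem[of B f b] assms(2) b(1) by auto
  with b show False by simp
qed

lemma hausd_le:
  assumes "A \<noteq> {}" "B \<noteq> {}" "\<And>a b. a\<in>A \<Longrightarrow> b\<in>B \<Longrightarrow> 0 \<le> d a b"
    "\<And>a. a \<in> A \<Longrightarrow> \<forall>e>0. \<exists>b\<in>B. d a b < r + e"
    "\<And>b. b \<in> B \<Longrightarrow> \<forall>e>0. \<exists>a\<in>A. d a b < r + e"
  shows "hausd d A B \<le> r"
proof -
  have 1: "(SUP a\<in>A. INF b\<in>B. d a b) \<le> r"
    using assms by (intro cSUP_least inf_le_of_eps) auto
  have 2: "(SUP b\<in>B. INF a\<in>A. d a b) \<le> r"
    using assms by (intro cSUP_least inf_le_of_eps) auto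
  show ?thesis using 1 2 unfolding hausd_def by simp
qed




definition metric_on :: "'a set \<Rightarrow> ('a \<Rightarrow> 'a \<Rightarrow> real) \<Rightarrow> bool" where
  "metric_on M d \<longleftrightarrow> (\<forall>x\<in>M. \<forall>y\<in>M. 0 \<le> d x y \<and> d x y = d y x \<and> (d x y = 0 \<longleftrightarrow> x = y)) \<and>
     (\<forall>x\<in>M. \<forall>y\<in>M. \<forall>z\<in>M. d x z \<le> d x y + d y z)"

lemma metric_onD:
  assumes "metric_on M d" "x \<in> M" "y \<in> M"
  shows "0 \<le> d x y" "d x y = d y x" "d x y = 0 \<longleftrightarrow> x = y"
  using assms unfolding metric_on_def by auto

lemma metric_on_tri:
  "metric_on M d \<Longrightarrow> x \<in> M \<Longrightarrow> y \<in> M \<Longrightarrow> z \<in> M \<Longrightarrow> d x z \<le> d x y + d y z"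
  unfolding metric_on_def by blast

definition glue_base :: "('c \<Rightarrow> 'c \<Rightarrow> real) \<Rightarrow> ('b \<Rightarrow> 'b \<Rightarrow> real) \<Rightarrow> real \<Rightarrow> 'c + 'b \<Rightarrow> 'c + 'b \<Rightarrow> real" where
  "glue_base dS dY r u v = (case u of Inl a \<Rightarrow> (case v of Inl b \<Rightarrow> dS a b | Inr y \<Rightarrow> r)
      | Inr x \<Rightarrow> (case v of Inl b \<Rightarrow> r | Inr y \<Rightarrow> dY x y))"

lemma glue_metric:
  fixes S :: "'c set" and Y :: "'b set"
  assumes mS: "metric_on S dS" and mY: "metric_on Y dY" and r: "r > 0"
    and bS: "\<And>a b. a\<in>S \<Longrightarrow> b\<in>S \<Longrightarrow> dS a b \<le> 2*r"
    and bY: "\<And>x y. x\<in>Y \<Longrightarrow> y\<in>Y \<Longrightarrow> dY x y \<le> 2*r"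
  defines "Z \<equiv> Inl ` S \<union> Inr ` Y"
  defines "dZ \<equiv> (\<lambda>u v. if u \<in> Z \<and> v \<in> Z then glue_base dS dY r u v else 0)"
  shows "Metric_space Z dZ"
proof -
    have tS: "\<And>a b c. a\<in>S \<Longrightarrow> b\<in>S \<Longrightarrow> c\<in>S \<Longrightarrow> dS a c \<le> dS a b + dS b c"
      and nS: "\<And>a b. a\<in>S \<Longrightarrow> b\<in>S \<Longrightarrow> 0 \<le> dS a b"
      and cS: "\<And>a b. a\<in>S \<Longrightarrow> b\<in>S \<Longrightarrow> dS a b = dS b a"
      and zS: "\<And>a b. a\<in>S \<Longrightarrow> b\<in>S \<Longrightarrow> dS a b = 0 \<longleftrightarrow> a = b"
      and tY: "\<And>a b c. a\<in>Y \<Longrightarrow> b\<in>Y \<Longrightarrow> c\<in>Y \<Longrightarrow> dY a c \<le> dY a b + dY b c"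
      and nY: "\<And>a b. a\<in>Y \<Longrightarrow> b\<in>Y \<Longrightarrow> 0 \<le> dY a b"
      and cY: "\<And>a b. a\<in>Y \<Longrightarrow> b\<in>Y \<Longrightarrow> dY a b = dY b a"
      and zY: "\<And>a b. a\<in>Y \<Longrightarrow> b\<in>Y \<Longrightarrow> dY a b = 0 \<longleftrightarrow> a = b"
      using metric_onD[OF mS] metric_onD[OF mY] metric_on_tri[OF mS] metric_on_tri[OF mY] by auto
  show ?thesis
  proof
  fix x y show "0 \<le> dZ x y" unfolding dZ_def Z_def glue_base_def
    using nS nY r by (cases x; cases y) auto
next
  fix x y show "dZ x y = dZ y x" unfolding dZ_def Z_def glue_base_def
    using cS cY by (cases x; cases y) auto
next
  fix x y assume "x \<in> Z" "y \<in> Z" then show "dZ x y = 0 \<longleftrightarrow> x = y"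
    unfolding dZ_def Z_def glue_base_def using zS zY r by (cases x; cases y) auto
next
  fix x y z assume xyz: "x \<in> Z" "y \<in> Z" "z \<in> Z"
  show "dZ x z \<le> dZ x y + dZ y z"
  proof -
    have xyz': "x \<in> Z" "y \<in> Z" "z \<in> Z" using xyz by auto
    then have e: "dZ x z = glue_base dS dY r x z" "dZ x y = glue_base dS dY r x y" "dZ y z = glue_base dS dY r y z"
      unfolding dZ_def by auto
    have "glue_base dS dY r x z \<le> glue_base dS dY r x y + glue_base dS dY r y z" using xyz'
    proof (cases x; cases y; cases z)
      fix a b c assume "x = Inl a" "y = Inl b" "z = Inl c" "x \<in> Z" "y \<in> Z" "z \<in> Z"
      then show ?thesis using tS[of a b c] by (auto simp: Z_def glue_base_def)
    next
      fix a b c assume "x = Inl a" "y = Inl b" "z = Inr c" "x \<in> Z" "y \<in> Z" "z \<in> Z"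
      then show ?thesis using nS[of a b] by (auto simp: Z_def glue_base_def)
    next
      fix a b c assume "x = Inl a" "y = Inr b" "z = Inl c" "x \<in> Z" "y \<in> Z" "z \<in> Z"
      then show ?thesis using bS[of a c] by (auto simp: Z_def glue_base_def)
    next
      fix a b c assume "x = Inl a" "y = Inr b" "z = Inr c" "x \<in> Z" "y \<in> Z" "z \<in> Z"
      then show ?thesis using nY[of b c] by (auto simp: Z_def glue_base_def)
    next
      fix a b c assume "x = Inr a" "y = Inl b" "z = Inl c" "x \<in> Z" "y \<in> Z" "z \<in> Z"
      then show ?thesis using nS[of b c] by (auto simp: Z_def glue_base_def)
    next
      fix a b c assume "x = Inr a" "y = Inl b" "z = Inr c" "x \<in> Z" "y \<in> Z" "z \<in> Z"
      then show ?thesis using bY[of a c] by (auto simp: Z_def glue_base_def)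
    next
      fix a b c assume "x = Inr a" "y = Inr b" "z = Inl c" "x \<in> Z" "y \<in> Z" "z \<in> Z"
      then show ?thesis using nY[of a b] by (auto simp: Z_def glue_base_def)
    next
      fix a b c assume "x = Inr a" "y = Inr b" "z = Inr c" "x \<in> Z" "y \<in> Z" "z \<in> Z"
      then show ?thesis using tY[of a b c] by (auto simp: Z_def glue_base_def)
    qed
    then show ?thesis using e by simp
  qed
qed
qed

lemma glue_member:
  fixes S :: "'c set" and Y :: "'b set"
  assumes "S \<noteq> {}" "Y \<noteq> {}" and mS: "metric_on S dS" and mY: "metric_on Y dY" and r: "r > 0"
    and bS: "\<And>a b. a\<in>S \<Longrightarrow> b\<in>S \<Longrightarrow> dS a b \<le> 2*r"
    and bY: "\<And>x y. x\<in>Y \<Longrightarrow> y\<in>Y \<Longrightarrow> dY x y \<le> 2*r"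
  shows "\<exists>(Z :: ('c + 'b) set) dZ f g.
      Metric_space Z dZ \<and> isom_embed S dS Z dZ f \<and> isom_embed Y dY Z dZ g \<and>
      hausd dZ (f ` S) (g ` Y) \<le> r"
proof -
  define Z where "Z = Inl ` S \<union> Inr ` Y"
  define dZ where "dZ = (\<lambda>u v. if u \<in> Z \<and> v \<in> Z then glue_base dS dY r u v else 0)"
  have M: "Metric_space Z dZ" unfolding Z_def dZ_def by (rule glue_metric[OF mS mY r bS bY])
  have 1: "isom_embed S dS Z dZ Inl" unfolding isom_embed_def Z_def dZ_def glue_base_def by auto
  have 2: "isom_embed Y dY Z dZ Inr" unfolding isom_embed_def Z_def dZ_def glue_base_def by auto
  have 3: "hausd dZ (Inl ` S) (Inr ` Y) \<le> r"
    apply (rule hausd_le)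
    using assms(1,2) r unfolding Z_def dZ_def glue_base_def by auto
  show ?thesis
    by (rule exI[of _ Z], rule exI[of _ dZ], rule exI[of _ Inl], rule exI[of _ Inr]) (use M 1 2 3 in simp)
qed




definition chainable :: "'b set \<Rightarrow> ('b \<Rightarrow> 'b \<Rightarrow> real) \<Rightarrow> bool" where
  "chainable Y d \<longleftrightarrow> (\<forall>e>0. \<forall>U. (\<forall>x\<in>Y. \<forall>y\<in>Y. d x y < e \<longrightarrow> (x \<in> U \<longleftrightarrow> y \<in> U))
      \<longrightarrow> (\<forall>x\<in>Y. \<forall>y\<in>Y. x \<in> U \<longleftrightarrow> y \<in> U))"

lemma cross_bound:
  assumes M: "Metric_space Z dZ" and F: "isom_embed S dS Z dZ f" and G: "isom_embed Y dY Z dZ g"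
    and a0: "a0 \<in> S" and y0: "y0 \<in> Y"
    and bS: "\<And>a b. a\<in>S \<Longrightarrow> b\<in>S \<Longrightarrow> dS a b \<le> T"
    and bY: "\<And>x y. x\<in>Y \<Longrightarrow> y\<in>Y \<Longrightarrow> dY x y \<le> D"
    and a: "a \<in> S" and y: "y \<in> Y"
  shows "0 \<le> dZ (f a) (g y) \<and> dZ (f a) (g y) \<le> T + dZ (f a0) (g y0) + D"
proof -
  interpret Metric_space Z dZ by (rule M)
  have inZ: "f a \<in> Z" "f a0 \<in> Z" "g y \<in> Z" "g y0 \<in> Z"
    using F G a a0 y y0 unfolding isom_embed_def by auto
  have e1: "dZ (f a) (f a0) = dS a a0" using F a a0 unfolding isom_embed_def by auto
  have e2: "dZ (g y0) (g y) = dY y0 y" using G y y0 unfolding isom_embed_def by auto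
  have "dZ (f a) (g y) \<le> dZ (f a) (f a0) + dZ (f a0) (g y)" using triangle[OF inZ(1,2,3)] .
  also have "dZ (f a0) (g y) \<le> dZ (f a0) (g y0) + dZ (g y0) (g y)" using triangle[OF inZ(2,4,3)] .
  finally show ?thesis using e1 e2 bS[OF a a0] bY[OF y0 y] by simp
qed

lemma GH_two:
  fixes S :: "'c set" and Y :: "'b set"
  assumes a12: "a1 \<in> S" "a2 \<in> S" "a1 \<noteq> a2"
    and dS: "\<And>a b. a\<in>S \<Longrightarrow> b\<in>S \<Longrightarrow> dS a b = (if a = b then 0 else t)" and t: "t > 0"
    and mY: "metric_on Y dY" and Yne: "Y \<noteq> {}"
    and bY: "\<And>x y. x\<in>Y \<Longrightarrow> y\<in>Y \<Longrightarrow> dY x y \<le> t" and ch: "chainable Y dY"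
  shows "GH_dist S dS Y dY = t/2"
  unfolding GH_dist_def
proof (rule cInf_eq_minimum)
  have mS: "metric_on S dS" unfolding metric_on_def using dS t by auto
  show "t/2 \<in> {r. \<exists>(Z :: ('c + 'b) set) dZ f g. Metric_space Z dZ \<and> isom_embed S dS Z dZ f \<and>
      isom_embed Y dY Z dZ g \<and> hausd dZ (f ` S) (g ` Y) \<le> r}"
  proof -
    have "\<exists>(Z :: ('c + 'b) set) dZ f g. Metric_space Z dZ \<and> isom_embed S dS Z dZ f \<and>
      isom_embed Y dY Z dZ g \<and> hausd dZ (f ` S) (g ` Y) \<le> t/2"
    proof (rule glue_member[OF _ Yne mS mY])
      show "S \<noteq> {}" using a12 by auto
      show "t/2 > 0" using t by simp
      show "\<And>a b. a\<in>S \<Longrightarrow> b\<in>S \<Longrightarrow> dS a b \<le> 2*(t/2)" using dS t by simp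
      show "\<And>x y. x\<in>Y \<Longrightarrow> y\<in>Y \<Longrightarrow> dY x y \<le> 2*(t/2)" using bY by simp
    qed
    then show ?thesis by simp
  qed
next
  fix r assume "r \<in> {r. \<exists>(Z :: ('c + 'b) set) dZ f g. Metric_space Z dZ \<and> isom_embed S dS Z dZ f \<and>
      isom_embed Y dY Z dZ g \<and> hausd dZ (f ` S) (g ` Y) \<le> r}"
  then obtain Z :: "('c + 'b) set" and dZ f g where M: "Metric_space Z dZ" and F: "isom_embed S dS Z dZ f"
    and G: "isom_embed Y dY Z dZ g" and h: "hausd dZ (f ` S) (g ` Y) \<le> r" by auto
  interpret Metric_space Z dZ by (rule M)
  show "t/2 \<le> r"
  proof (rule ccontr)
    assume "\<not> t/2 \<le> r"
    define \<rho> where "\<rho> = (r + t/2)/2"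
    have \<rho>: "r < \<rho>" "\<rho> < t/2" using \<open>\<not> t/2 \<le> r\<close> unfolding \<rho>_def by auto
    obtain y0 where y0: "y0 \<in> Y" using Yne by auto
    define K where "K = t + dZ (f a1) (g y0) + t"
    have bS: "\<And>a b. a\<in>S \<Longrightarrow> b\<in>S \<Longrightarrow> dS a b \<le> t" using dS t by auto
    have KB: "\<And>u v. u \<in> f ` S \<Longrightarrow> v \<in> g ` Y \<Longrightarrow> 0 \<le> dZ u v \<and> dZ u v \<le> K"
      using cross_bound[OF M F G a12(1) y0 bS bY] unfolding K_def by blast
    have hl: "hausd dZ (f ` S) (g ` Y) < \<rho>" using h \<rho> by simp
    have Sne: "f ` S \<noteq> {}" using a12 by auto
    have Yne': "g ` Y \<noteq> {}" using Yne by auto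
    have near: "\<exists>a\<in>S. dZ (f a) (g y) < \<rho>" if y: "y \<in> Y" for y
      using hausd_lt2[OF Sne Yne' KB hl] y by blast
    have near2: "\<exists>y\<in>Y. dZ (f a) (g y) < \<rho>" if a: "a \<in> S" for a
      using hausd_lt1[OF Sne Yne' KB hl] a by blast
    have inZ: "\<And>a. a \<in> S \<Longrightarrow> f a \<in> Z" "\<And>y. y \<in> Y \<Longrightarrow> g y \<in> Z"
      using F G unfolding isom_embed_def by auto
    have fS: "\<And>a b. a \<in> S \<Longrightarrow> b \<in> S \<Longrightarrow> dZ (f a) (f b) = dS a b"
      using F unfolding isom_embed_def by auto
    have gY: "\<And>x y. x \<in> Y \<Longrightarrow> y \<in> Y \<Longrightarrow> dZ (g x) (g y) = dY x y"
      using G unfolding isom_embed_def by auto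
    have uniq: "a = b" if "a \<in> S" "b \<in> S" "y \<in> Y" "y' \<in> Y" "dZ (f a) (g y) < \<rho>"
      "dZ (f b) (g y') < \<rho>" "dY y y' < t - 2*\<rho>" for a b y y'
    proof (rule ccontr)
      assume "a \<noteq> b"
      then have "dZ (f a) (f b) = t" using fS dS that by auto
      moreover have "dZ (f a) (f b) \<le> dZ (f a) (g y) + dZ (g y) (f b)"
        by (rule triangle[OF inZ(1)[OF that(1)] inZ(2)[OF that(3)] inZ(1)[OF that(2)]])
      moreover have "dZ (g y) (f b) \<le> dZ (g y) (g y') + dZ (g y') (f b)"
        by (rule triangle[OF inZ(2)[OF that(3)] inZ(2)[OF that(4)] inZ(1)[OF that(2)]])
      moreover have "dZ (g y') (f b) = dZ (f b) (g y')" by (rule commute)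
      moreover have "dZ (g y) (g y') = dY y y'" using gY that by simp
      ultimately show False using that by linarith
    qed
    define \<phi> where "\<phi> y = (SOME a. a \<in> S \<and> dZ (f a) (g y) < \<rho>)" for y
    have \<phi>: "\<phi> y \<in> S \<and> dZ (f (\<phi> y)) (g y) < \<rho>" if "y \<in> Y" for y
      unfolding \<phi>_def using someI_ex[OF near[OF that, unfolded Bex_def]] by blast
    have e: "t - 2*\<rho> > 0" using \<rho> by simp
    define U where "U = {y. \<phi> y = \<phi> y0}"
    have ch0: "\<forall>e>0. \<forall>U. (\<forall>x\<in>Y. \<forall>y\<in>Y. dY x y < e \<longrightarrow> (x \<in> U \<longleftrightarrow> y \<in> U))
      \<longrightarrow> (\<forall>x\<in>Y. \<forall>y\<in>Y. x \<in> U \<longleftrightarrow> y \<in> U)" using ch unfolding chainable_def .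
    have ch1: "(\<forall>x\<in>Y. \<forall>y\<in>Y. dY x y < t - 2*\<rho> \<longrightarrow> (x \<in> U \<longleftrightarrow> y \<in> U))
      \<longrightarrow> (\<forall>x\<in>Y. \<forall>y\<in>Y. x \<in> U \<longleftrightarrow> y \<in> U)"
      using spec[OF mp[OF spec[OF ch0, of "t - 2*\<rho>"] e], of U] .
    have hyp: "\<forall>x\<in>Y. \<forall>y\<in>Y. dY x y < t - 2*\<rho> \<longrightarrow> (x \<in> U \<longleftrightarrow> y \<in> U)"
    proof (intro ballI impI)
      fix x y assume xy: "x \<in> Y" "y \<in> Y" "dY x y < t - 2*\<rho>"
      have "\<phi> x = \<phi> y" by (rule uniq[of "\<phi> x" "\<phi> y" x y]) (use \<phi>[OF xy(1)] \<phi>[OF xy(2)] xy in auto)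
      then show "(x \<in> U \<longleftrightarrow> y \<in> U)" unfolding U_def by simp
    qed
    have "\<forall>x\<in>Y. \<forall>y\<in>Y. x \<in> U \<longleftrightarrow> y \<in> U" using mp[OF ch1 hyp] .
    note allU = this
    have const: "\<phi> y = \<phi> y0" if "y \<in> Y" for y
    proof -
      have "y \<in> U \<longleftrightarrow> y0 \<in> U" using allU that y0 by blast
      moreover have "y0 \<in> U" unfolding U_def by simp
      ultimately show ?thesis unfolding U_def by simp
    qed
    define b where "b = (if a1 = \<phi> y0 then a2 else a1)"
    have b: "b \<in> S" "b \<noteq> \<phi> y0" using a12 unfolding b_def by auto
    obtain y where y: "y \<in> Y" "dZ (f b) (g y) < \<rho>" using near2[OF b(1)] by blast
    have "dY y y = 0" using metric_onD[OF mY y(1) y(1)] by simp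
    then have "\<phi> y = b" by (intro uniq[of "\<phi> y" b y y]) (use \<phi>[OF y(1)] y b e in auto)
    then show False using const[OF y(1)] b by simp
  qed
qed




lemma diam_facts:
  assumes "Y \<noteq> {}" "\<And>x y. x\<in>Y \<Longrightarrow> y\<in>Y \<Longrightarrow> 0 \<le> dY x y \<and> dY x y \<le> D"
  shows "\<And>x y. x\<in>Y \<Longrightarrow> y\<in>Y \<Longrightarrow> dY x y \<le> diam_of Y dY" and "0 \<le> diam_of Y dY"
    and "\<And>c. (\<And>x y. x\<in>Y \<Longrightarrow> y\<in>Y \<Longrightarrow> dY x y \<le> c) \<Longrightarrow> diam_of Y dY \<le> c"
proof -
  have bdd: "bdd_above {dY x y | x y. x \<in> Y \<and> y \<in> Y}"
    using assms(2) by (auto intro!: bdd_aboveI[where M=D])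
  have ne: "{dY x y | x y. x \<in> Y \<and> y \<in> Y} \<noteq> {}" using assms(1) by auto
  show 1: "\<And>x y. x\<in>Y \<Longrightarrow> y\<in>Y \<Longrightarrow> dY x y \<le> diam_of Y dY"
    unfolding diam_of_def by (rule cSup_upper[OF _ bdd]) auto
  obtain y0 where y0: "y0 \<in> Y" using assms(1) by auto
  show "0 \<le> diam_of Y dY" using 1[OF y0 y0] assms(2)[OF y0 y0] by linarith
  show "\<And>c. (\<And>x y. x\<in>Y \<Longrightarrow> y\<in>Y \<Longrightarrow> dY x y \<le> c) \<Longrightarrow> diam_of Y dY \<le> c"
    unfolding diam_of_def by (rule cSup_least[OF ne]) auto
qed

lemma GH_one:
  fixes s :: 'c and Y :: "'b set"
  assumes s0: "dS s s = 0" and mY: "metric_on Y dY" and Yne: "Y \<noteq> {}"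
    and bY: "\<And>x y. x\<in>Y \<Longrightarrow> y\<in>Y \<Longrightarrow> dY x y \<le> D"
  shows "GH_dist {s} dS Y dY = diam_of Y dY / 2"
proof -
  define R where "R = {r. \<exists>(Z :: ('c + 'b) set) dZ f g. Metric_space Z dZ \<and> isom_embed {s} dS Z dZ f \<and>
      isom_embed Y dY Z dZ g \<and> hausd dZ (f ` {s}) (g ` Y) \<le> r}"
  have bY': "\<And>x y. x\<in>Y \<Longrightarrow> y\<in>Y \<Longrightarrow> 0 \<le> dY x y \<and> dY x y \<le> D"
    using bY metric_onD(1)[OF mY] by auto
  have df1: "\<And>x y. x\<in>Y \<Longrightarrow> y\<in>Y \<Longrightarrow> dY x y \<le> diam_of Y dY"
    using diam_facts(1)[of Y dY D] Yne bY' by blast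
  have df2: "0 \<le> diam_of Y dY" using diam_facts(2)[of Y dY D] Yne bY' by blast
  have df3: "\<And>c. (\<And>x y. x\<in>Y \<Longrightarrow> y\<in>Y \<Longrightarrow> dY x y \<le> c) \<Longrightarrow> diam_of Y dY \<le> c"
    using diam_facts(3)[of Y dY D] Yne bY' by blast
  have mS: "metric_on {s} dS" unfolding metric_on_def using s0 by auto
  have mem: "r \<in> R" if r: "r > diam_of Y dY / 2" for r
  proof -
    have "\<exists>(Z :: ('c + 'b) set) dZ f g. Metric_space Z dZ \<and> isom_embed {s} dS Z dZ f \<and>
      isom_embed Y dY Z dZ g \<and> hausd dZ (f ` {s}) (g ` Y) \<le> r"
    proof (rule glue_member[OF _ Yne mS mY])
      show "r > 0" using r df2 by linarith
      show "\<And>a b. a\<in>{s} \<Longrightarrow> b\<in>{s} \<Longrightarrow> dS a b \<le> 2*r" using s0 r df2 by auto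
      show "\<And>x y. x\<in>Y \<Longrightarrow> y\<in>Y \<Longrightarrow> dY x y \<le> 2*r" using df1 r by fastforce
    qed simp
    then show ?thesis unfolding R_def by simp
  qed
  have low: "diam_of Y dY / 2 \<le> r" if "r \<in> R" for r
  proof -
    obtain Z :: "('c + 'b) set" and dZ f g where M: "Metric_space Z dZ" and F: "isom_embed {s} dS Z dZ f"
      and G: "isom_embed Y dY Z dZ g" and h: "hausd dZ (f ` {s}) (g ` Y) \<le> r"
      using \<open>r \<in> R\<close> unfolding R_def by auto
    interpret Metric_space Z dZ by (rule M)
    obtain y0 where y0: "y0 \<in> Y" using Yne by auto
    define K where "K = 0 + dZ (f s) (g y0) + D"
    have KB: "\<And>u v. u \<in> f ` {s} \<Longrightarrow> v \<in> g ` Y \<Longrightarrow> 0 \<le> dZ u v \<and> dZ u v \<le> K"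
      using cross_bound[OF M F G _ y0, of s 0 D] s0 bY unfolding K_def by auto
    have inZ: "f s \<in> Z" "\<And>y. y \<in> Y \<Longrightarrow> g y \<in> Z"
      using F G unfolding isom_embed_def by auto
    have gY: "\<And>x y. x \<in> Y \<Longrightarrow> y \<in> Y \<Longrightarrow> dZ (g x) (g y) = dY x y"
      using G unfolding isom_embed_def by auto
    have "dY x y \<le> 2*r" if xy: "x \<in> Y" "y \<in> Y" for x y
    proof (rule field_le_epsilon)
      fix e :: real assume e: "e > 0"
      have hl: "hausd dZ (f ` {s}) (g ` Y) < r + e/2" using h e by simp
      have n: "dZ (f s) (g z) < r + e/2" if "z \<in> Y" for z
        using hausd_lt2[OF _ _ KB hl, of "g z"] that by auto
      have "dZ (g x) (g y) \<le> dZ (g x) (f s) + dZ (f s) (g y)"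
        by (rule triangle[OF inZ(2)[OF xy(1)] inZ(1) inZ(2)[OF xy(2)]])
      moreover have "dZ (g x) (f s) = dZ (f s) (g x)" by (rule commute)
      ultimately show "dY x y \<le> 2*r + e" using n[OF xy(1)] n[OF xy(2)] gY[OF xy] by linarith
    qed
    then have "diam_of Y dY \<le> 2*r" using df3 by blast
    then show ?thesis by simp
  qed
  have Rne: "R \<noteq> {}" using mem[of "diam_of Y dY / 2 + 1"] by auto
  have bddR: "bdd_below R" using low by (intro bdd_belowI[where m="diam_of Y dY / 2"]) auto
  have "Inf R = diam_of Y dY / 2"
  proof (rule antisym)
    show "diam_of Y dY / 2 \<le> Inf R" using Rne low by (intro cInf_greatest) auto
    show "Inf R \<le> diam_of Y dY / 2"
    proof (rule field_le_epsilon)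
      fix e :: real assume "e > 0"
      then show "Inf R \<le> diam_of Y dY / 2 + e" using mem[of "diam_of Y dY / 2 + e"] cInf_lower[OF _ bddR] by auto
    qed
  qed
  then show ?thesis unfolding GH_dist_def R_def .
qed




lemma connected_chainable:
  assumes M: "Metric_space X d" and C: "connected_space (Metric_space.mtopology X d)"
  shows "chainable X d"
proof -
  interpret Metric_space X d by (rule M)
  show ?thesis unfolding chainable_def
  proof (intro allI impI ballI)
    fix e :: real and U x y
    assume e: "e > 0" and hyp: "\<forall>x\<in>X. \<forall>y\<in>X. d x y < e \<longrightarrow> (x \<in> U \<longleftrightarrow> y \<in> U)"
      and x: "x \<in> X" and y: "y \<in> X"
    define V where "V = X \<inter> U"
    have o1: "openin mtopology V" unfolding openin_mtopology
    proof (intro conjI allI impI)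
      show "V \<subseteq> X" unfolding V_def by auto
      fix z assume z: "z \<in> V"
      show "\<exists>r>0. mball z r \<subseteq> V"
      proof (intro exI conjI)
        show "e > 0" by (rule e)
        show "mball z e \<subseteq> V" using z hyp unfolding V_def by auto
      qed
    qed
    have o2: "openin mtopology (X - V)" unfolding openin_mtopology
    proof (intro conjI allI impI)
      show "X - V \<subseteq> X" by auto
      fix z assume z: "z \<in> X - V"
      show "\<exists>r>0. mball z r \<subseteq> X - V"
      proof (intro exI conjI)
        show "e > 0" by (rule e)
        show "mball z e \<subseteq> X - V" using z hyp unfolding V_def by auto
      qed
    qed
    have c1: "closedin mtopology V" unfolding closedin_def using o2 unfolding V_def by auto
    have "V = {} \<or> V = X" using C o1 c1 unfolding connected_space_clopen_in by auto
    then show "x \<in> U \<longleftrightarrow> y \<in> U" using x y unfolding V_def by auto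
  qed
qed

lemma continuum_facts:
  assumes "continuum X d"
  shows "Metric_space X d" "X \<noteq> {}" "\<exists>K. \<forall>x\<in>X. \<forall>y\<in>X. d x y \<le> K" "chainable X d"
    "compact_space (Metric_space.mtopology X d)"
proof -
  show M: "Metric_space X d" and "X \<noteq> {}" and cs: "compact_space (Metric_space.mtopology X d)"
    using assms unfolding continuum_def by auto
  show "chainable X d" using assms M connected_chainable unfolding continuum_def by blast
  interpret Metric_space X d by (rule M)
  have "compactin mtopology X" using cs unfolding compact_space_def by simp
  then have "mbounded X" by (rule compactin_imp_mbounded)
  then show "\<exists>K. \<forall>x\<in>X. \<forall>y\<in>X. d x y \<le> K" unfolding mbounded_alt by blast
qed




lemma metric_space_metric_on: "Metric_space X d \<Longrightarrow> metric_on X d"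
  unfolding metric_on_def by (auto intro: Metric_space.triangle Metric_space.commute
     simp: Metric_space.zero Metric_space.nonneg)

lemma hausd_single: "d x y = d y x \<Longrightarrow> hausd d {x} {y} = d x y"
  unfolding hausd_def by simp

context
  fixes X :: "'a set" and d :: "'a \<Rightarrow> 'a \<Rightarrow> real" and K :: real
  assumes M: "Metric_space X d" and K: "\<And>x y. x \<in> X \<Longrightarrow> y \<in> X \<Longrightarrow> d x y \<le> K"
begin

interpretation Metric_space X d by (rule M)

lemma hypD: "A \<in> hyp_carrier X d \<Longrightarrow> A \<subseteq> X \<and> A \<noteq> {} \<and> closedin mtopology A"
  unfolding hyp_carrier_def by auto

lemma hypKB: "A \<subseteq> X \<Longrightarrow> B \<subseteq> X \<Longrightarrow> (\<And>a b. a\<in>A \<Longrightarrow> b\<in>B \<Longrightarrow> 0 \<le> d a b \<and> d a b \<le> K)"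
  using K by auto

lemma finite_hyp: "finite F \<Longrightarrow> F \<subseteq> X \<Longrightarrow> F \<noteq> {} \<Longrightarrow> F \<in> hyp_carrier X d"
proof -
  assume F: "finite F" "F \<subseteq> X" "F \<noteq> {}"
  have "closedin mtopology F" using t1_space_mtopology F unfolding t1_space_closedin_finite by simp
  then show ?thesis using F unfolding hyp_carrier_def by auto
qed

lemma hausd_self: "A \<subseteq> X \<Longrightarrow> A \<noteq> {} \<Longrightarrow> hausd d A A = 0"
proof -
  assume A: "A \<subseteq> X" "A \<noteq> {}"
  have self: "\<forall>e>0. \<exists>b\<in>A. d a b < 0 + e" if "a \<in> A" for a
  proof (intro allI impI)
    fix e :: real assume "e > 0"
    then show "\<exists>b\<in>A. d a b < 0 + e" using that A by (intro bexI[of _ a]) auto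
  qed
  have self2: "\<forall>e>0. \<exists>b\<in>A. d b a < 0 + e" if "a \<in> A" for a
  proof (intro allI impI)
    fix e :: real assume "e > 0"
    then show "\<exists>b\<in>A. d b a < 0 + e" using that A by (intro bexI[of _ a]) auto
  qed
  have "hausd d A A \<le> 0" by (rule hausd_le) (use A self self2 in auto)
  moreover have "0 \<le> hausd d A A" by (rule hausd_ge0[OF A(2) A(2) hypKB[OF A(1) A(1)]])
  ultimately show ?thesis by simp
qed

lemma hausd_comm: "hausd d A B = hausd d B A"
proof -
  have "(\<lambda>x y. d y x) = d" by (intro ext) (simp add: commute)
  then show ?thesis using hausd_swap[of d A B] by simp
qed

lemma hyp_metric: "metric_on (hyp_carrier X d) (hausd d)"
  unfolding metric_on_def
proof (intro conjI ballI)
  fix A B assume A: "A \<in> hyp_carrier X d" and B: "B \<in> hyp_carrier X d"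
  note a = hypD[OF A] and b = hypD[OF B]
  note KB = hypKB[of A B] a b
  have aa: "A \<subseteq> X" "A \<noteq> {}" "closedin mtopology A" using a by auto
  have bb: "B \<subseteq> X" "B \<noteq> {}" "closedin mtopology B" using b by auto
  note KAB = hypKB[OF aa(1) bb(1)]
  show "0 \<le> hausd d A B" by (rule hausd_ge0[OF aa(2) bb(2) KAB])
  show "hausd d A B = hausd d B A" by (rule hausd_comm)
  show "hausd d A B = 0 \<longleftrightarrow> A = B"
  proof
    assume h0: "hausd d A B = 0"
    have AB: "A \<subseteq> B"
    proof
      fix x assume x: "x \<in> A"
      show "x \<in> B"
      proof (rule ccontr)
        assume "x \<notin> B"
        have "\<forall>x. x \<in> X - B \<longrightarrow> (\<exists>r>0. disjnt B (mball x r))" using bb(3) unfolding closedin_metric by blast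
        moreover have "x \<in> X - B" using x aa(1) \<open>x \<notin> B\<close> by auto
        ultimately obtain r where r: "r > 0" "disjnt B (mball x r)" by blast
        have "hausd d A B < r" using h0 r by simp
        then obtain y where y: "y \<in> B" "d x y < r" using hausd_lt1[of A B d K r x, OF aa(2) bb(2) KAB _ x] by blast
        have "y \<in> mball x r" using y x aa(1) bb(1) by auto
        then show False using r(2) y(1) by (auto simp: disjnt_iff)
      qed
    qed
    have BA: "B \<subseteq> A"
    proof
      fix x assume x: "x \<in> B"
      show "x \<in> A"
      proof (rule ccontr)
        assume "x \<notin> A"
        have "\<forall>x. x \<in> X - A \<longrightarrow> (\<exists>r>0. disjnt A (mball x r))" using aa(3) unfolding closedin_metric by blast
        moreover have "x \<in> X - A" using x bb(1) \<open>x \<notin> A\<close> by auto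
        ultimately obtain r where r: "r > 0" "disjnt A (mball x r)" by blast
        have "hausd d A B < r" using h0 r by simp
        then obtain y where y: "y \<in> A" "d y x < r" using hausd_lt2[of A B d K r x, OF aa(2) bb(2) KAB _ x] by blast
        have "y \<in> mball x r" using y x aa(1) bb(1) commute[of x y] by auto
        then show False using r(2) y(1) by (auto simp: disjnt_iff)
      qed
    qed
    show "A = B" using AB BA by auto
  next
    assume "A = B" then show "hausd d A B = 0" using hausd_self aa by simp
  qed
next
  fix A B C assume A: "A \<in> hyp_carrier X d" and B: "B \<in> hyp_carrier X d" and C: "C \<in> hyp_carrier X d"
  note a = hypD[OF A] and b = hypD[OF B] and c = hypD[OF C]
  have kab: "\<And>u v. u \<in> A \<Longrightarrow> v \<in> B \<Longrightarrow> 0 \<le> d u v \<and> d u v \<le> K" using a b K by auto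
  have kbc: "\<And>u v. u \<in> B \<Longrightarrow> v \<in> C \<Longrightarrow> 0 \<le> d u v \<and> d u v \<le> K" using c b K by auto
  show "hausd d A C \<le> hausd d A B + hausd d B C"
  proof (rule hausd_le)
    show "A \<noteq> {}" "C \<noteq> {}" using a c by auto
    show "\<And>x y. x \<in> A \<Longrightarrow> y \<in> C \<Longrightarrow> 0 \<le> d x y" by simp
  next
    fix x assume x: "x \<in> A"
    show "\<forall>e>0. \<exists>z\<in>C. d x z < hausd d A B + hausd d B C + e"
    proof (intro allI impI)
      fix e :: real assume e: "e > 0"
      obtain y where y: "y \<in> B" "d x y < hausd d A B + e/2"
        using hausd_lt1[of A B d K "hausd d A B + e/2" x, OF _ _ kab] a b x e by auto
      obtain z where z: "z \<in> C" "d y z < hausd d B C + e/2"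
        using hausd_lt1[of B C d K "hausd d B C + e/2" y, OF _ _ kbc] c b y e by auto
      have "d x z \<le> d x y + d y z" by (rule triangle) (use a b c x y z in auto)
      then show "\<exists>z\<in>C. d x z < hausd d A B + hausd d B C + e" using y z by (intro bexI[of _ z]) auto
    qed
  next
    fix z assume z: "z \<in> C"
    show "\<forall>e>0. \<exists>x\<in>A. d x z < hausd d A B + hausd d B C + e"
    proof (intro allI impI)
      fix e :: real assume e: "e > 0"
      obtain y where y: "y \<in> B" "d y z < hausd d B C + e/2"
        using hausd_lt2[of B C d K "hausd d B C + e/2" z, OF _ _ kbc] c b z e by auto
      obtain x where x: "x \<in> A" "d x y < hausd d A B + e/2"
        using hausd_lt2[of A B d K "hausd d A B + e/2" y, OF _ _ kab] a b y e by auto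
      have "d x z \<le> d x y + d y z" by (rule triangle) (use a b c x y z in auto)
      then show "\<exists>x\<in>A. d x z < hausd d A B + hausd d B C + e" using y x by (intro bexI[of _ x]) auto
    qed
  qed
qed

end




context
  fixes X :: "'a set" and d :: "'a \<Rightarrow> 'a \<Rightarrow> real" and K :: real
  assumes M: "Metric_space X d" and K: "\<And>x y. x \<in> X \<Longrightarrow> y \<in> X \<Longrightarrow> d x y \<le> K"
    and Xne: "X \<noteq> {}"
begin

interpretation Metric_space X d by (rule M)

lemma XK: "\<And>x y. x\<in>X \<Longrightarrow> y\<in>X \<Longrightarrow> 0 \<le> d x y \<and> d x y \<le> K" using K by auto

lemma dX_le_diam: "x \<in> X \<Longrightarrow> y \<in> X \<Longrightarrow> d x y \<le> diam_of X d"
  using diam_facts(1)[of X d K] Xne XK by blast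

lemma hausd_le_diam:
  assumes A: "A \<in> hyp_carrier X d" and B: "B \<in> hyp_carrier X d"
  shows "hausd d A B \<le> diam_of X d"
proof (rule hausd_le)
  show "A \<noteq> {}" "B \<noteq> {}" using A B unfolding hyp_carrier_def by auto
  show "\<And>a b. a \<in> A \<Longrightarrow> b \<in> B \<Longrightarrow> 0 \<le> d a b" by simp
next
  fix a assume a: "a \<in> A"
  obtain b where b: "b \<in> B" using B unfolding hyp_carrier_def by auto
  show "\<forall>e>0. \<exists>b\<in>B. d a b < diam_of X d + e"
  proof (intro allI impI)
    fix e :: real assume "e > 0"
    moreover have "d a b \<le> diam_of X d" using dX_le_diam a b A B unfolding hyp_carrier_def by auto
    ultimately show "\<exists>b\<in>B. d a b < diam_of X d + e" using b by (intro bexI[of _ b]) auto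
  qed
next
  fix b assume b: "b \<in> B"
  obtain a where a: "a \<in> A" using A unfolding hyp_carrier_def by auto
  show "\<forall>e>0. \<exists>a\<in>A. d a b < diam_of X d + e"
  proof (intro allI impI)
    fix e :: real assume "e > 0"
    moreover have "d a b \<le> diam_of X d" using dX_le_diam a b A B unfolding hyp_carrier_def by auto
    ultimately show "\<exists>a\<in>A. d a b < diam_of X d + e" using a by (intro bexI[of _ a]) auto
  qed
qed

lemma singleton_hyp: "x \<in> X \<Longrightarrow> {x} \<in> hyp_carrier X d"
  using finite_hyp[OF M K] by auto

lemma diam_hyp: "diam_of (hyp_carrier X d) (hausd d) = diam_of X d"
proof (rule antisym)
  obtain x0 where x0: "x0 \<in> X" using Xne by auto
  have Hne: "hyp_carrier X d \<noteq> {}" using singleton_hyp[OF x0] by auto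
  have HB: "\<And>A B. A \<in> hyp_carrier X d \<Longrightarrow> B \<in> hyp_carrier X d \<Longrightarrow> 0 \<le> hausd d A B \<and> hausd d A B \<le> diam_of X d"
    using hausd_le_diam metric_onD(1)[OF hyp_metric[OF M K]] by auto
  show "diam_of (hyp_carrier X d) (hausd d) \<le> diam_of X d"
    using diam_facts(3)[of "hyp_carrier X d" "hausd d" "diam_of X d" "diam_of X d"] Hne HB by blast
  have "d x y \<le> diam_of (hyp_carrier X d) (hausd d)" if "x \<in> X" "y \<in> X" for x y
  proof -
    have "hausd d {x} {y} = d x y" by (rule hausd_single) (rule commute)
    moreover have "hausd d {x} {y} \<le> diam_of (hyp_carrier X d) (hausd d)"
      using diam_facts(1)[of "hyp_carrier X d" "hausd d" "diam_of X d"] Hne HB singleton_hyp that by blast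
    ultimately show ?thesis by simp
  qed
  then show "diam_of X d \<le> diam_of (hyp_carrier X d) (hausd d)"
    using diam_facts(3)[of X d K] Xne XK by blast
qed

end




lemma chainableD:
  assumes "chainable Y d" "e > 0" "\<And>x y. x \<in> Y \<Longrightarrow> y \<in> Y \<Longrightarrow> d x y < e \<Longrightarrow> (x \<in> U \<longleftrightarrow> y \<in> U)"
    "x \<in> Y" "y \<in> Y"
  shows "x \<in> U \<longleftrightarrow> y \<in> U"
proof -
  have ch0: "\<forall>e>0. \<forall>U. (\<forall>x\<in>Y. \<forall>y\<in>Y. d x y < e \<longrightarrow> (x \<in> U \<longleftrightarrow> y \<in> U))
      \<longrightarrow> (\<forall>x\<in>Y. \<forall>y\<in>Y. x \<in> U \<longleftrightarrow> y \<in> U)" using assms(1) unfolding chainable_def .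
  have ch1: "(\<forall>x\<in>Y. \<forall>y\<in>Y. d x y < e \<longrightarrow> (x \<in> U \<longleftrightarrow> y \<in> U))
      \<longrightarrow> (\<forall>x\<in>Y. \<forall>y\<in>Y. x \<in> U \<longleftrightarrow> y \<in> U)"
    using spec[OF mp[OF spec[OF ch0, of e] assms(2)], of U] .
  have "\<forall>x\<in>Y. \<forall>y\<in>Y. d x y < e \<longrightarrow> (x \<in> U \<longleftrightarrow> y \<in> U)" using assms(3) by blast
  then have "\<forall>x\<in>Y. \<forall>y\<in>Y. x \<in> U \<longleftrightarrow> y \<in> U" using ch1 by (rule rev_mp)
  then show ?thesis using assms(4,5) by blast
qed

context
  fixes X :: "'a set" and d :: "'a \<Rightarrow> 'a \<Rightarrow> real" and K :: real
  assumes M: "Metric_space X d" and K: "\<And>x y. x \<in> X \<Longrightarrow> y \<in> X \<Longrightarrow> d x y \<le> K"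
    and Xne: "X \<noteq> {}"
begin

interpretation Metric_space X d by (rule M)

lemma hausd_insert:
  assumes x: "x \<in> X" and y: "y \<in> X" and F: "F \<subseteq> X"
  shows "hausd d (insert x F) (insert y F) \<le> d x y"
proof (rule hausd_le)
  show "insert x F \<noteq> {}" "insert y F \<noteq> {}" by auto
  show "\<And>a b. a \<in> insert x F \<Longrightarrow> b \<in> insert y F \<Longrightarrow> 0 \<le> d a b" by simp
next
  fix a assume a: "a \<in> insert x F"
  show "\<forall>e>0. \<exists>b\<in>insert y F. d a b < d x y + e"
  proof (intro allI impI)
    fix e :: real assume e: "e > 0"
    show "\<exists>b\<in>insert y F. d a b < d x y + e"
    proof (cases "a = x")
      case True then show ?thesis using e by (intro bexI[of _ y]) auto
    next
      case False then have "a \<in> F" using a by auto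
      moreover then have "a \<in> X" using F by auto
      ultimately show ?thesis using e by (intro bexI[of _ a]) (auto intro: add_nonneg_pos)
    qed
  qed
next
  fix b assume b: "b \<in> insert y F"
  show "\<forall>e>0. \<exists>a\<in>insert x F. d a b < d x y + e"
  proof (intro allI impI)
    fix e :: real assume e: "e > 0"
    show "\<exists>a\<in>insert x F. d a b < d x y + e"
    proof (cases "b = y")
      case True then show ?thesis using e by (intro bexI[of _ x]) auto
    next
      case False then have "b \<in> F" using b by auto
      moreover then have "b \<in> X" using F by auto
      ultimately show ?thesis using e by (intro bexI[of _ b]) (auto intro: add_nonneg_pos)
    qed
  qed
qed

lemma chainable_hyp:
  assumes ch: "chainable X d" and cs: "compact_space mtopology"
  shows "chainable (hyp_carrier X d) (hausd d)"
  unfolding chainable_def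
proof (intro allI impI ballI)
  fix e :: real and U A B
  assume e: "e > 0" and hyp: "\<forall>x\<in>hyp_carrier X d. \<forall>y\<in>hyp_carrier X d. hausd d x y < e \<longrightarrow> (x \<in> U \<longleftrightarrow> y \<in> U)"
    and A: "A \<in> hyp_carrier X d" and B: "B \<in> hyp_carrier X d"
  obtain x0 where x0: "x0 \<in> X" using Xne by auto
  have fh: "\<And>F. finite F \<Longrightarrow> F \<subseteq> X \<Longrightarrow> F \<noteq> {} \<Longrightarrow> F \<in> hyp_carrier X d"
    using finite_hyp[OF M K] by blast
  have key: "insert x F \<in> U \<longleftrightarrow> F \<in> U" if F: "finite F" "F \<subseteq> X" "F \<noteq> {}" and x: "x \<in> X" for F x
  proof -
    obtain f where f: "f \<in> F" using F by auto
    have "x \<in> {z. insert z F \<in> U} \<longleftrightarrow> f \<in> {z. insert z F \<in> U}"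
    proof (rule chainableD[OF ch e _ x])
      show "f \<in> X" using f F by auto
      fix u v assume uv: "u \<in> X" "v \<in> X" "d u v < e"
      have "hausd d (insert u F) (insert v F) < e" using hausd_insert[OF uv(1,2) F(2)] uv(3) by simp
      moreover have "insert u F \<in> hyp_carrier X d" "insert v F \<in> hyp_carrier X d"
        using fh F uv by auto
      ultimately show "u \<in> {z. insert z F \<in> U} \<longleftrightarrow> v \<in> {z. insert z F \<in> U}" using hyp by auto
    qed
    moreover have "insert f F = F" using f by auto
    ultimately show ?thesis by simp
  qed
  have fin: "F \<in> U \<longleftrightarrow> {x0} \<in> U" if "finite F" "F \<noteq> {}" "F \<subseteq> X" for F
    using that
  proof (induction F rule: finite_ne_induct)
    case (singleton x)
    have 1: "insert x {x0} \<in> U \<longleftrightarrow> {x0} \<in> U" using key[of "{x0}" x] x0 singleton by auto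
    have 2: "insert x0 {x} \<in> U \<longleftrightarrow> {x} \<in> U" using key[of "{x}" x0] x0 singleton by auto
    have "insert x {x0} = insert x0 {x}" by auto
    then show ?case using 1 2 by simp
  next
    case (insert x F)
    then show ?case using key[of F x] by auto
  qed
  have comp: "C \<in> U \<longleftrightarrow> {x0} \<in> U" if C: "C \<in> hyp_carrier X d" for C
  proof -
    have Cc: "C \<subseteq> X" "C \<noteq> {}" "closedin mtopology C" using C unfolding hyp_carrier_def by auto
    have "compactin mtopology C" by (rule closedin_compact_space[OF cs Cc(3)])
    then have "mtotally_bounded C" by (rule compactin_imp_mtotally_bounded)
    then obtain F where F: "finite F" "F \<subseteq> C" "C \<subseteq> (\<Union>x\<in>F. mball x (e/2))"
      unfolding mtotally_bounded_def using e by (meson half_gt_zero)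
    have Fne: "F \<noteq> {}" using F Cc by auto
    have "hausd d C F \<le> e/2"
    proof (rule hausd_le)
      show "C \<noteq> {}" "F \<noteq> {}" using Cc Fne by auto
      show "\<And>a b. a \<in> C \<Longrightarrow> b \<in> F \<Longrightarrow> 0 \<le> d a b" by simp
    next
      fix a assume a: "a \<in> C"
      then obtain f where f: "f \<in> F" "a \<in> mball f (e/2)" using F by auto
      then have "d a f < e/2" using commute by auto
      then show "\<forall>e'>0. \<exists>b\<in>F. d a b < e/2 + e'" using f by (intro allI impI bexI[of _ f]) auto
    next
      fix b assume b: "b \<in> F"
      then have "b \<in> X" using F Cc by auto
      then show "\<forall>e'>0. \<exists>a\<in>C. d a b < e/2 + e'" using b F e by (intro allI impI bexI[of _ b]) auto
    qed
    then have "hausd d C F < e" using e by simp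
    moreover have "F \<in> hyp_carrier X d" using fh F Fne Cc by auto
    ultimately have "C \<in> U \<longleftrightarrow> F \<in> U" using hyp C by auto
    also have "\<dots> \<longleftrightarrow> {x0} \<in> U" using fin F Fne Cc by auto
    finally show ?thesis .
  qed
  show "A \<in> U \<longleftrightarrow> B \<in> U" using comp[OF A] comp[OF B] by simp
qed

end




lemma simplex_metric: "t > 0 \<Longrightarrow> Metric_space {0..<p} (simplex_dist t)"
  unfolding simplex_dist_def by unfold_locales auto

lemma simplex_K: "t > 0 \<Longrightarrow> simplex_dist t x y \<le> t"
  unfolding simplex_dist_def by auto

lemma hyp_simplex_dist:
  assumes t: "t > 0" and A: "A \<in> hyp_carrier {0..<p} (simplex_dist t)" and B: "B \<in> hyp_carrier {0..<p} (simplex_dist t)"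
  shows "hausd (simplex_dist t) A B = (if A = B then 0 else t)"
proof -
  have M: "Metric_space {0..<p} (simplex_dist t)" by (rule simplex_metric[OF t])
  have K: "\<And>x y. x \<in> {0..<p} \<Longrightarrow> y \<in> {0..<p} \<Longrightarrow> simplex_dist t x y \<le> t" using simplex_K[OF t] by blast
  have a: "A \<subseteq> {0..<p}" "A \<noteq> {}" and b: "B \<subseteq> {0..<p}" "B \<noteq> {}" using A B unfolding hyp_carrier_def by auto
  have KB: "\<And>u v. u \<in> A \<Longrightarrow> v \<in> B \<Longrightarrow> 0 \<le> simplex_dist t u v \<and> simplex_dist t u v \<le> t"
    using t unfolding simplex_dist_def by auto
  show ?thesis
  proof (cases "A = B")
    case True then show ?thesis using hausd_self[OF M K a] by simp
  next
    case False
    have le: "hausd (simplex_dist t) A B \<le> t"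
    proof (rule hausd_le[OF a(2) b(2)])
      show "\<And>u v. u \<in> A \<Longrightarrow> v \<in> B \<Longrightarrow> 0 \<le> simplex_dist t u v" using KB by blast
      show "\<And>u. u \<in> A \<Longrightarrow> \<forall>e>0. \<exists>v\<in>B. simplex_dist t u v < t + e"
      proof (intro allI impI)
        fix u and e :: real assume "e > 0"
        obtain v where "v \<in> B" using b(2) by auto
        moreover have "simplex_dist t u v \<le> t" by (rule simplex_K[OF t])
        ultimately show "\<exists>v\<in>B. simplex_dist t u v < t + e" using \<open>e > 0\<close> by (intro bexI[of _ v]) auto
      qed
      show "\<And>v. v \<in> B \<Longrightarrow> \<forall>e>0. \<exists>u\<in>A. simplex_dist t u v < t + e"
      proof (intro allI impI)
        fix v and e :: real assume "e > 0"
        obtain u where "u \<in> A" using a(2) by auto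
        moreover have "simplex_dist t u v \<le> t" by (rule simplex_K[OF t])
        ultimately show "\<exists>u\<in>A. simplex_dist t u v < t + e" using \<open>e > 0\<close> by (intro bexI[of _ u]) auto
      qed
    qed
    have ge: "t \<le> hausd (simplex_dist t) A B"
    proof (rule ccontr)
      assume lt: "\<not> t \<le> hausd (simplex_dist t) A B"
      then have lt': "hausd (simplex_dist t) A B < t" by simp
      from False have "(\<exists>u\<in>A. u \<notin> B) \<or> (\<exists>v\<in>B. v \<notin> A)" by auto
      then show False
      proof
        assume "\<exists>u\<in>A. u \<notin> B"
        then obtain u where u: "u \<in> A" "u \<notin> B" by blast
        obtain v where v: "v \<in> B" "simplex_dist t u v < t"
          using hausd_lt1[of A B "simplex_dist t" t t u, OF a(2) b(2) KB lt' u(1)] by blast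
        then show False using u unfolding simplex_dist_def by (auto split: if_splits)
      next
        assume "\<exists>v\<in>B. v \<notin> A"
        then obtain v where v: "v \<in> B" "v \<notin> A" by blast
        obtain u where u: "u \<in> A" "simplex_dist t u v < t"
          using hausd_lt2[of A B "simplex_dist t" t t v, OF a(2) b(2) KB lt' v(1)] by blast
        then show False using v unfolding simplex_dist_def by (auto split: if_splits)
      qed
    qed
    show ?thesis using le ge False by simp
  qed
qed

theorem mainTheorem17:
  fixes X :: "'a set" and d :: "'a \<Rightarrow> 'a \<Rightarrow> real" and t :: real and p :: nat
  assumes "continuum X d"
    and "t \<ge> diam_of X d" and "t > 0" and "p \<ge> 1"
  shows "GH_dist (simplex_carrier p) (simplex_dist t) X d =
         GH_dist (hyp_carrier (simplex_carrier p) (simplex_dist t)) (hyp_dist (simplex_dist t))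
                 (hyp_carrier X d) (hyp_dist d)"
proof -
  note cf = continuum_facts[OF assms(1)]
  have M: "Metric_space X d" and Xne: "X \<noteq> {}" and ch: "chainable X d"
    and cs: "compact_space (Metric_space.mtopology X d)" using cf by auto
  obtain K where K: "\<And>x y. x \<in> X \<Longrightarrow> y \<in> X \<Longrightarrow> d x y \<le> K" using cf(3) by blast
  have mX: "metric_on X d" by (rule metric_space_metric_on[OF M])
  have mH: "metric_on (hyp_carrier X d) (hausd d)" by (rule hyp_metric[OF M K])
  obtain x0 where x0: "x0 \<in> X" using Xne by auto
  have Hne: "hyp_carrier X d \<noteq> {}" using singleton_hyp[OF M K Xne x0] by auto
  have bX: "\<And>x y. x \<in> X \<Longrightarrow> y \<in> X \<Longrightarrow> d x y \<le> t" using dX_le_diam[OF M K Xne] assms(2) by fastforce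
  have bH: "\<And>A B. A \<in> hyp_carrier X d \<Longrightarrow> B \<in> hyp_carrier X d \<Longrightarrow> hausd d A B \<le> t"
    using hausd_le_diam[OF M K Xne] assms(2) by fastforce
  have bH': "\<And>A B. A \<in> hyp_carrier X d \<Longrightarrow> B \<in> hyp_carrier X d \<Longrightarrow> hausd d A B \<le> diam_of X d"
    using hausd_le_diam[OF M K Xne] by blast
  show ?thesis
  proof (cases "p = 1")
    case True
    have S1: "simplex_carrier p = {0}" unfolding simplex_carrier_def True by auto
    have L: "GH_dist (simplex_carrier p) (simplex_dist t) X d = diam_of X d / 2"
      unfolding S1 by (rule GH_one[OF _ mX Xne K]) (simp add: simplex_dist_def)
    have HS: "hyp_carrier {0::nat} (simplex_dist t) = {{0}}"
    proof -
      have "{0::nat} \<in> hyp_carrier {0} (simplex_dist t)"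
        using finite_hyp[OF simplex_metric[OF assms(3), of 1] simplex_K[OF assms(3)]] by simp
      then show ?thesis unfolding hyp_carrier_def by auto
    qed
    have R: "GH_dist (hyp_carrier (simplex_carrier p) (simplex_dist t)) (hyp_dist (simplex_dist t))
                 (hyp_carrier X d) (hyp_dist d) = diam_of (hyp_carrier X d) (hausd d) / 2"
      unfolding S1 HS hyp_dist_def
      by (rule GH_one[OF _ mH Hne bH']) (simp add: hausd_def simplex_dist_def)
    show ?thesis using L R diam_hyp[OF M K Xne] by simp
  next
    case False
    then have p2: "p \<ge> 2" using assms(4) by simp
    have L: "GH_dist (simplex_carrier p) (simplex_dist t) X d = t/2"
    proof (rule GH_two[OF _ _ _ _ assms(3) mX Xne bX ch])
      show "0 \<in> simplex_carrier p" "1 \<in> simplex_carrier p" unfolding simplex_carrier_def using p2 by auto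
      show "(0::nat) \<noteq> 1" by simp
      show "\<And>a b. a \<in> simplex_carrier p \<Longrightarrow> b \<in> simplex_carrier p \<Longrightarrow> simplex_dist t a b = (if a = b then 0 else t)"
        unfolding simplex_dist_def by simp
    qed
    have chH: "chainable (hyp_carrier X d) (hausd d)" by (rule chainable_hyp[OF M K Xne ch cs])
    have fhS: "\<And>F. finite F \<Longrightarrow> F \<subseteq> {0..<p} \<Longrightarrow> F \<noteq> {} \<Longrightarrow> F \<in> hyp_carrier {0..<p} (simplex_dist t)"
      using finite_hyp[OF simplex_metric[OF assms(3), of p] simplex_K[OF assms(3)]] by blast
    have R: "GH_dist (hyp_carrier (simplex_carrier p) (simplex_dist t)) (hyp_dist (simplex_dist t))
                 (hyp_carrier X d) (hyp_dist d) = t/2"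
      unfolding hyp_dist_def simplex_carrier_def
    proof (rule GH_two[OF _ _ _ _ assms(3) mH Hne bH chH])
      show "{0} \<in> hyp_carrier {0..<p} (simplex_dist t)" "{1} \<in> hyp_carrier {0..<p} (simplex_dist t)"
        using fhS p2 by auto
      show "{0::nat} \<noteq> {1}" by simp
      show "\<And>a b. a \<in> hyp_carrier {0..<p} (simplex_dist t) \<Longrightarrow> b \<in> hyp_carrier {0..<p} (simplex_dist t) \<Longrightarrow>
          hausd (simplex_dist t) a b = (if a = b then 0 else t)"
        using hyp_simplex_dist[OF assms(3)] by blast
    qed
    show ?thesis using L R by simp
  qed
qed



end
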